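(* Let $M$ be a combinatorial $3$-pseudomanifold with vertex set $V=V_1\dot\cup V_2$, let $S_{(V_1,V_2)}$ be the associated slicing, let $Q$ be a quadrilateral of $S_{(V_1,V_2)}$, and let $x\in V_1$, $a\in V_2$. Then $Q$ shares at most one edge with the trace $C^x$ and at most one edge with the trace $C_a$.
   Context: A combinatorial $3$-pseudomanifold is a finite pure $3$-dimensional simplicial complex in which the link of every vertex is a combinatorial surface. A function $f:M\to\mathbb{R}$ is regular simplexwise linear (rsl) if it is linear on every simplex and takes pairwise distinct values on the vertices. Given a partition $V=V_1\dot\cup V_2$ of the vertex set into nonempty sets, choose an rsl-function $f$ with $f(v)<f(w)$ for all $v\in V_1$, $w\in V_2$ and $x_0$ strictly between $\max f(V_1)$ and $\min f(V_2)$; the slicing $S_{(V_1,V_2)}$ is the polyhedral complex $f^{-1}(x_0)$ (made of triangles and quadrilaterals). Each vertex of $S_{(V_1,V_2)}$ is the intersection point of $f^{-1}(x_0)$ with an edge $\langle u,w\rangle$ of $M$ with $u\in V_1$, $w\in V_2$, and is denoted $\binom{u}{w}$. For $x\in V_1$ define $C^x_2$ as the set of faces of $S_{(V_1,V_2)}$ of the form $\langle\binom{x}{a},\binom{x}{b},\binom{x}{c}\rangle$ with $a,b,c\in V_2$, and $C^x_1$ as the set of faces of $S_{(V_1,V_2)}$ not in $C^x_2$ of the form $\langle\binom{x}{a},\binom{x}{b}\rangle$ with $a,b\in V_2$; the trace of $x$ is $C^x:=\overline{C^x_2\cup C^x_1}$ (the subcomplex generated). Analogously, for $a\in V_2$,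 the trace $C_a$ is the closure of the set of triangles $\langle\binom{x}{a},\binom{y}{a},\binom{z}{a}\rangle$ and edges $\langle\binom{x}{a},\binom{y}{a}\rangle$ ($x,y,z\in V_1$) of $S_{(V_1,V_2)}$. *)

theory Defs
  imports Main
begin

definition simplicial_complex :: "'a set set \<Rightarrow> bool" where
  "simplicial_complex K \<longleftrightarrow> finite K \<and> (\<forall>\<sigma>\<in>K. finite \<sigma> \<and> \<sigma> \<noteq> {}) \<and>
     (\<forall>\<sigma>\<in>K. \<forall>\<tau>. \<tau> \<subseteq> \<sigma> \<and> \<tau> \<noteq> {} \<longrightarrow> \<tau> \<in> K)"

definition verts :: "'a set set \<Rightarrow> 'a set" where
  "verts K = \<Union>K"

definition pure_dim :: "'a set set \<Rightarrow> nat \<Rightarrow> bool" where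
  "pure_dim K d \<longleftrightarrow> (\<forall>\<sigma>\<in>K. card \<sigma> \<le> d + 1) \<and> (\<forall>\<sigma>\<in>K. \<exists>\<tau>\<in>K. \<sigma> \<subseteq> \<tau> \<and> card \<tau> = d + 1)"

definition link :: "'a set set \<Rightarrow> 'a \<Rightarrow> 'a set set" where
  "link K v = {\<tau> \<in> K. v \<notin> \<tau> \<and> insert v \<tau> \<in> K}"

definition adj :: "'a set set \<Rightarrow> ('a \<times> 'a) set" where
  "adj K = {(u, w). {u, w} \<in> K \<and> u \<noteq> w}"

definition connected_cx :: "'a set set \<Rightarrow> bool" where
  "connected_cx K \<longleftrightarrow> (\<forall>u\<in>verts K. \<forall>w\<in>verts K. (u, w) \<in> (adj K)\<^sup>*)"

definition comb_circle :: "'a set set \<Rightarrow> bool" where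
  "comb_circle L \<longleftrightarrow> simplicial_complex L \<and> pure_dim L 1 \<and> L \<noteq> {} \<and>
     (\<forall>v\<in>verts L. card {e \<in> L. card e = 2 \<and> v \<in> e} = 2) \<and> connected_cx L"

definition comb_surface :: "'a set set \<Rightarrow> bool" where
  "comb_surface L \<longleftrightarrow> simplicial_complex L \<and> pure_dim L 2 \<and> L \<noteq> {} \<and>
     (\<forall>e\<in>L. card e = 2 \<longrightarrow> card {t \<in> L. card t = 3 \<and> e \<subseteq> t} = 2) \<and>
     (\<forall>v\<in>verts L. comb_circle (link L v)) \<and> connected_cx L"

definition comb_3_pseudomanifold :: "'a set set \<Rightarrow> bool" where
  "comb_3_pseudomanifold M \<longleftrightarrow> simplicial_complex M \<and> pure_dim M 3 \<and> M \<noteq> {} \<and>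
     (\<forall>v\<in>verts M. comb_surface (link M v))"

text \<open>Slicing S_(V1,V2): the vertex binom(u,w) is the pair (u,w) (u in V1, w in V2).
  The face of S cut out of a simplex sigma meeting both V1 and V2 has vertex set
  (sigma \<inter> V1) \<times> (sigma \<inter> V2); faces are identified with their vertex sets.\<close>
definition slicing :: "'a set set \<Rightarrow> 'a set \<Rightarrow> 'a set \<Rightarrow> ('a \<times> 'a) set set" where
  "slicing M V1 V2 = {(\<sigma> \<inter> V1) \<times> (\<sigma> \<inter> V2) | \<sigma>. \<sigma> \<in> M \<and> \<sigma> \<inter> V1 \<noteq> {} \<and> \<sigma> \<inter> V2 \<noteq> {}}"

definition quadrilateral :: "'a set set \<Rightarrow> 'a set \<Rightarrow> 'a set \<Rightarrow> ('a \<times> 'a) set \<Rightarrow> bool" where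
  "quadrilateral M V1 V2 Q \<longleftrightarrow> Q \<in> slicing M V1 V2 \<and> card Q = 4"

definition face_edges :: "'a set set \<Rightarrow> 'a set \<Rightarrow> 'a set \<Rightarrow> ('a \<times> 'a) set \<Rightarrow> ('a \<times> 'a) set set" where
  "face_edges M V1 V2 F = {e \<in> slicing M V1 V2. card e = 2 \<and> e \<subseteq> F}"

definition gen_closure :: "('a \<times> 'a) set set \<Rightarrow> ('a \<times> 'a) set set \<Rightarrow> ('a \<times> 'a) set set" where
  "gen_closure S C = {c \<in> S. \<exists>d\<in>C. c \<subseteq> d}"

definition trace2_up :: "'a set set \<Rightarrow> 'a set \<Rightarrow> 'a set \<Rightarrow> 'a \<Rightarrow> ('a \<times> 'a) set set" where
  "trace2_up M V1 V2 x = {t \<in> slicing M V1 V2. \<exists>a b c. a \<in> V2 \<and> b \<in> V2 \<and> c \<in> V2 \<and>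
      a \<noteq> b \<and> a \<noteq> c \<and> b \<noteq> c \<and> t = {(x, a), (x, b), (x, c)}}"

definition trace1_up :: "'a set set \<Rightarrow> 'a set \<Rightarrow> 'a set \<Rightarrow> 'a \<Rightarrow> ('a \<times> 'a) set set" where
  "trace1_up M V1 V2 x = {e \<in> slicing M V1 V2. e \<notin> trace2_up M V1 V2 x \<and>
      (\<exists>a b. a \<in> V2 \<and> b \<in> V2 \<and> a \<noteq> b \<and> e = {(x, a), (x, b)})}"

definition trace_up :: "'a set set \<Rightarrow> 'a set \<Rightarrow> 'a set \<Rightarrow> 'a \<Rightarrow> ('a \<times> 'a) set set" where
  "trace_up M V1 V2 x = gen_closure (slicing M V1 V2) (trace2_up M V1 V2 x \<union> trace1_up M V1 V2 x)"

definition trace_low :: "'a set set \<Rightarrow> 'a set \<Rightarrow> 'a set \<Rightarrow> 'a \<Rightarrow> ('a \<times> 'a) set set" where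
  "trace_low M V1 V2 a = gen_closure (slicing M V1 V2)
     ({t \<in> slicing M V1 V2. \<exists>x y z. x \<in> V1 \<and> y \<in> V1 \<and> z \<in> V1 \<and>
         x \<noteq> y \<and> x \<noteq> z \<and> y \<noteq> z \<and> t = {(x, a), (y, a), (z, a)}} \<union>
      {e \<in> slicing M V1 V2. \<exists>x y. x \<in> V1 \<and> y \<in> V1 \<and> x \<noteq> y \<and> e = {(x, a), (y, a)}})"

end

theory Submission
  imports Defs
begin

lemma two_sub_eq:
  assumes "finite S" "card S \<le> 2" "e \<subseteq> S" "e' \<subseteq> S" "card e = 2" "card e' = 2"
  shows "e = e'"
proof -
  have "card e = card S" using assms card_mono[of S e] by linarith
  hence "e = S" using assms card_subset_eq by blast
  moreover have "card e' = card S" using assms card_mono[of S e'] by linarith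
  hence "e' = S" using assms card_subset_eq by blast
  ultimately show ?thesis by simp
qed

lemma nat_prod4: "(p::nat) * q = 4 \<Longrightarrow> p + q \<le> 4 \<Longrightarrow> p \<le> 2 \<and> q \<le> 2"
proof -
  assume h: "p * q = 4" "p + q \<le> 4"
  hence "p \<le> 4" "q \<le> 4" by auto
  hence "p \<in> {0,1,2,3,4}" "q \<in> {0,1,2,3,4}" by auto
  then show ?thesis using h by auto
qed

theorem lemma3p6:
  fixes M :: "'a set set" and V1 V2 :: "'a set" and Q :: "('a \<times> 'a) set" and x a :: 'a
  assumes "comb_3_pseudomanifold M"
    and "V1 \<union> V2 = verts M" and "V1 \<inter> V2 = {}" and "V1 \<noteq> {}" and "V2 \<noteq> {}"
    and "quadrilateral M V1 V2 Q"
    and "x \<in> V1" and "a \<in> V2"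
  shows "(\<forall>e\<in>face_edges M V1 V2 Q \<inter> trace_up M V1 V2 x.
            \<forall>e'\<in>face_edges M V1 V2 Q \<inter> trace_up M V1 V2 x. e = e') \<and>
         (\<forall>e\<in>face_edges M V1 V2 Q \<inter> trace_low M V1 V2 a.
            \<forall>e'\<in>face_edges M V1 V2 Q \<inter> trace_low M V1 V2 a. e = e')"
proof -
  obtain \<sigma> where s: "\<sigma> \<in> M" "Q = (\<sigma> \<inter> V1) \<times> (\<sigma> \<inter> V2)" "card Q = 4"
    using assms(6) unfolding quadrilateral_def slicing_def by blast
  have fs: "finite \<sigma>" "card \<sigma> \<le> 4" using assms(1) s(1)
    unfolding comb_3_pseudomanifold_def simplicial_complex_def pure_dim_def by auto
  define A where "A = \<sigma> \<inter> V1"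
  define B where "B = \<sigma> \<inter> V2"
  have fA: "finite A" "finite B" using fs A_def B_def by auto
  have "card A + card B = card (A \<union> B)"
    using fA assms(3) A_def B_def by (subst card_Un_disjoint) auto
  also have "\<dots> \<le> card \<sigma>" using fs A_def B_def by (intro card_mono) auto
  finally have sum: "card A + card B \<le> 4" using fs by linarith
  have "card A * card B = 4" using s(2,3) A_def B_def card_cartesian_product by metis
  with sum have cAB: "card A \<le> 2" "card B \<le> 2" using nat_prod4 by blast+
  have Q: "Q = A \<times> B" using s A_def B_def by simp
  have up: "\<forall>p\<in>e. fst p = x" if hu: "e \<in> trace_up M V1 V2 x" for e
  proof -
    obtain d where d: "d \<in> trace2_up M V1 V2 x \<union> trace1_up M V1 V2 x" "e \<subseteq> d"
      using hu unfolding trace_up_def gen_closure_def by blast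
    have "\<forall>p\<in>d. fst p = x" using d(1) unfolding trace2_up_def trace1_up_def by auto
    thus ?thesis using d(2) by blast
  qed
  have low: "\<forall>p\<in>e. snd p = a" if hl: "e \<in> trace_low M V1 V2 a" for e
  proof -
    obtain d where d: "d \<in> {t \<in> slicing M V1 V2. \<exists>x y z. x \<in> V1 \<and> y \<in> V1 \<and> z \<in> V1 \<and>
         x \<noteq> y \<and> x \<noteq> z \<and> y \<noteq> z \<and> t = {(x, a), (y, a), (z, a)}} \<union>
      {e \<in> slicing M V1 V2. \<exists>x y. x \<in> V1 \<and> y \<in> V1 \<and> x \<noteq> y \<and> e = {(x, a), (y, a)}}" "e \<subseteq> d"
      using hl unfolding trace_low_def gen_closure_def by blast
    have "\<forall>p\<in>d. snd p = a" using d(1) by auto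
    thus ?thesis using d(2) by blast
  qed
  have c1: "card ({x} \<times> B) \<le> 2" using cAB by (simp add: card_cartesian_product)
  have c2: "card (A \<times> {a}) \<le> 2" using cAB by (simp add: card_cartesian_product)
  have part1: "e = e'" if "e \<in> face_edges M V1 V2 Q \<inter> trace_up M V1 V2 x"
    "e' \<in> face_edges M V1 V2 Q \<inter> trace_up M V1 V2 x" for e e'
  proof (rule two_sub_eq[OF _ c1])
    show "finite ({x} \<times> B)" using fA by simp
    show "e \<subseteq> {x} \<times> B" using that(1) up[of e] Q unfolding face_edges_def by auto
    show "e' \<subseteq> {x} \<times> B" using that(2) up[of e'] Q unfolding face_edges_def by auto
    show "card e = 2" "card e' = 2" using that unfolding face_edges_def by auto
  qed
  have part2: "e = e'" if "e \<in> face_edges M V1 V2 Q \<inter> trace_low M V1 V2 a"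
    "e' \<in> face_edges M V1 V2 Q \<inter> trace_low M V1 V2 a" for e e'
  proof (rule two_sub_eq[OF _ c2])
    show "finite (A \<times> {a})" using fA by simp
    show "e \<subseteq> A \<times> {a}" using that(1) low[of e] Q unfolding face_edges_def by auto
    show "e' \<subseteq> A \<times> {a}" using that(2) low[of e'] Q unfolding face_edges_def by auto
    show "card e = 2" "card e' = 2" using that unfolding face_edges_def by auto
  qed
  show ?thesis using part1 part2 by blast
qed

end
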